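(* For all 5-complex numbers $u',u''$, the modulus of their product satisfies $|u'u''|\leq \sqrt{5}\,|u'|\,|u''|$.
   Context: A 5-complex number is an expression $u=x_0+h_1x_1+h_2x_2+h_3x_3+h_4x_4$ with $x_0,\dots,x_4\in\mathbb{R}$. Addition is componentwise. Multiplication is the commutative, associative, bilinear product determined by $h_jh_k=h_{(j+k)\bmod 5}$ with $h_0=1$; explicitly, if $u=\sum_j h_jx_j$ and $u'=\sum_j h_jx'_j$, then the coefficient of $h_l$ in $uu'$ is $\sum_{j+k\equiv l \pmod 5} x_jx'_k$. The modulus of $u$ is $|u|=d=(x_0^2+x_1^2+x_2^2+x_3^2+x_4^2)^{1/2}$. *)

theory Defs
  imports "HOL-Analysis.Analysis"
begin

text \<open>A 5-complex number x0 + h1 x1 + ... + h4 x4 is represented by its coefficient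
vector in real^5, indexed by the numeral type 5 (= integers mod 5, with addition mod 5).\<close>

type_synonym complex5 = "real ^ 5"

definition mult5 :: "complex5 \<Rightarrow> complex5 \<Rightarrow> complex5" where
  "mult5 u v = (\<chi> l. \<Sum>j\<in>(UNIV :: 5 set). \<Sum>k\<in>(UNIV :: 5 set).
      (if j + k = l then u $ j * v $ k else 0))"

definition modulus5 :: "complex5 \<Rightarrow> real" where
  "modulus5 u = sqrt (\<Sum>j\<in>(UNIV :: 5 set). (u $ j)^2)"

end

theory Submission
  imports Defs
begin

lemma mod_norm: "modulus5 u = norm u"
  by (simp add: modulus5_def norm_vec_def L2_set_def)

lemma mult_comp: "mult5 u v $ l = (\<Sum>j\<in>UNIV. u $ j * v $ (l - j))"
proof -
  have "\<And>j. (\<Sum>k\<in>(UNIV::5 set). (if j + k = l then u $ j * v $ k else 0)) = u $ j * v $ (l - j)"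
  proof -
    fix j :: 5
    have "\<And>k. (j + k = l) = (k = l - j)" by (auto simp: algebra_simps)
    then show "(\<Sum>k\<in>(UNIV::5 set). (if j + k = l then u $ j * v $ k else 0)) = u $ j * v $ (l - j)"
      by (simp add: sum.delta')
  qed
  then show ?thesis by (simp add: mult5_def)
qed

lemma norm_shift: "norm (\<chi> j. (v::complex5) $ ((l::5) - j)) = norm v"
proof -
  have "(\<Sum>j\<in>(UNIV::5 set). (v $ (l - j))^2) = (\<Sum>k\<in>UNIV. (v $ k)^2)"
    by (rule sum.reindex_bij_witness[where i="\<lambda>k. l - k" and j="\<lambda>j. l - j"]) auto
  then show ?thesis by (simp add: norm_vec_def L2_set_def)
qed

lemma comp_bound: "\<bar>mult5 u v $ (l::5)\<bar> \<le> norm u * norm v"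
proof -
  have "mult5 u v $ l = inner u (\<chi> j. v $ (l - j))"
    by (simp add: mult_comp inner_vec_def)
  then show ?thesis using Cauchy_Schwarz_ineq2[of u "\<chi> j. v $ (l - j)"] norm_shift[of v l]
    by simp
qed

theorem mainTheorem1:
  fixes u' u'' :: complex5
  shows "modulus5 (mult5 u' u'') \<le> sqrt 5 * modulus5 u' * modulus5 u''"
proof -
  have "\<And>l. (mult5 u' u'' $ l)^2 \<le> (norm u' * norm u'')^2"
    using comp_bound by (metis abs_ge_zero power2_abs power_mono)
  then have "(\<Sum>l\<in>(UNIV::5 set). (mult5 u' u'' $ l)^2) \<le> (\<Sum>l\<in>(UNIV::5 set). (norm u' * norm u'')^2)"
    by (rule sum_mono)
  also have "\<dots> = 5 * (norm u' * norm u'')^2" by simp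
  finally have "modulus5 (mult5 u' u'') \<le> sqrt (5 * (norm u' * norm u'')^2)"
    unfolding modulus5_def by (rule real_sqrt_le_mono)
  also have "\<dots> = sqrt 5 * norm u' * norm u''"
    by (simp add: real_sqrt_mult)
  finally show ?thesis by (simp add: mod_norm)
qed

end
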